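(* Let $H$ be a simple, co-hopfian, complete group, and let $G$ be a simple, complete group with $H\subsetneq G$ such that every proper subgroup of $G$ is either cyclic or contained in a conjugate $g^{-1}Hg$ ($g\in G$) of $H$. Then $G$ is co-hopfian and the inclusion $H\subseteq G$ is a localization.
   Context: A group homomorphism $i\colon H\to G$ is a localization if for every homomorphism $\varphi\colon H\to G$ there exists a unique homomorphism $\psi\colon G\to G$ with $\psi\circ i=\varphi$; for $H\subseteq G$, "$H\subseteq G$ is a localization" means the inclusion map is. A group is co-hopfian if every injective endomorphism is an automorphism; complete if it has trivial center and every automorphism is inner. *)

theory Defs
  imports "HOL-Algebra.Algebra"
begin

text \<open>Simple group (possibly infinite; the library locale simple_group requires
  order G > 1, which fails for infinite groups since card of an infinite set is 0).\<close>
definition simple_grp :: "('a, 'b) monoid_scheme \<Rightarrow> bool" where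
  "simple_grp G \<longleftrightarrow> group G \<and> carrier G \<noteq> {\<one>\<^bsub>G\<^esub>} \<and>
     (\<forall>N. N \<lhd> G \<longrightarrow> N = {\<one>\<^bsub>G\<^esub>} \<or> N = carrier G)"

definition co_hopfian :: "('a, 'b) monoid_scheme \<Rightarrow> bool" where
  "co_hopfian G \<longleftrightarrow> group G \<and>
     (\<forall>f \<in> hom G G. inj_on f (carrier G) \<longrightarrow> f \<in> iso G G)"

definition grp_center :: "('a, 'b) monoid_scheme \<Rightarrow> 'a set" where
  "grp_center G = {z \<in> carrier G. \<forall>x \<in> carrier G. z \<otimes>\<^bsub>G\<^esub> x = x \<otimes>\<^bsub>G\<^esub> z}"

definition complete_grp :: "('a, 'b) monoid_scheme \<Rightarrow> bool" where
  "complete_grp G \<longleftrightarrow> group G \<and> grp_center G = {\<one>\<^bsub>G\<^esub>} \<and>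
     (\<forall>f \<in> iso G G. \<exists>g \<in> carrier G. \<forall>x \<in> carrier G.
        f x = g \<otimes>\<^bsub>G\<^esub> x \<otimes>\<^bsub>G\<^esub> inv\<^bsub>G\<^esub> g)"

definition localization ::
  "('a \<Rightarrow> 'c) \<Rightarrow> ('a, 'b) monoid_scheme \<Rightarrow> ('c, 'd) monoid_scheme \<Rightarrow> bool" where
  "localization i H G \<longleftrightarrow> i \<in> hom H G \<and>
     (\<forall>\<phi> \<in> hom H G. \<exists>\<psi> \<in> hom G G. (\<forall>x \<in> carrier H. \<psi> (i x) = \<phi> x) \<and>
        (\<forall>\<psi>' \<in> hom G G. (\<forall>x \<in> carrier H. \<psi>' (i x) = \<phi> x) \<longrightarrow>
            (\<forall>y \<in> carrier G. \<psi>' y = \<psi> y)))"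

definition conj_subset :: "('a, 'b) monoid_scheme \<Rightarrow> 'a \<Rightarrow> 'a set \<Rightarrow> 'a set" where
  "conj_subset G g H = (\<lambda>h. inv\<^bsub>G\<^esub> g \<otimes>\<^bsub>G\<^esub> h \<otimes>\<^bsub>G\<^esub> g) ` H"

end

theory Submission imports Defs begin

lemma simple_hom_cases:
  assumes "simple_grp A" "group B" "f \<in> hom A B"
  shows "(\<forall>x\<in>carrier A. f x = \<one>\<^bsub>B\<^esub>) \<or> inj_on f (carrier A)"
proof -
  have gA: "group A" using assms(1) by (simp add: simple_grp_def)
  interpret group_hom A B f using gA assms(2,3) by (simp add: group_hom_def group_hom_axioms_def)
  have "kernel A B f \<lhd> A" by (rule normal_kernel)
  then have "kernel A B f = {\<one>\<^bsub>A\<^esub>} \<or> kernel A B f = carrier A"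
    using assms(1) by (simp add: simple_grp_def)
  then show ?thesis
  proof
    assume "kernel A B f = {\<one>\<^bsub>A\<^esub>}" then show ?thesis using inj_iff_trivial_ker by simp
  next
    assume "kernel A B f = carrier A" then show ?thesis unfolding kernel_def by auto
  qed
qed

lemma noncyc:
  assumes "complete_grp A" "simple_grp A" "group G" "f \<in> hom A G" "inj_on f (carrier A)"
    "f ` carrier A \<subseteq> K" "subgroup K G" "cyclic_group (G\<lparr>carrier := K\<rparr>)"
  shows False
proof -
  have gA: "group A" using assms(1) by (simp add: complete_grp_def)
  have gK: "group (G\<lparr>carrier := K\<rparr>)" using group.subgroup_imp_group[OF assms(3,7)] .
  have cK: "comm_group (G\<lparr>carrier := K\<rparr>)" using group.cyclic_imp_abelian_group[OF gK assms(8)] .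
  have comm: "x \<otimes>\<^bsub>A\<^esub> y = y \<otimes>\<^bsub>A\<^esub> x" if "x \<in> carrier A" "y \<in> carrier A" for x y
  proof -
    have "f x \<in> K" "f y \<in> K" using assms(6) that by auto
    then have "f x \<otimes>\<^bsub>G\<^esub> f y = f y \<otimes>\<^bsub>G\<^esub> f x"
      using comm_monoid.m_comm[OF comm_group.axioms(1)[OF cK]] by fastforce
    then have "f (x \<otimes>\<^bsub>A\<^esub> y) = f (y \<otimes>\<^bsub>A\<^esub> x)" using assms(4) that by (simp add: hom_mult)
    then show ?thesis using assms(5) that gA by (meson group.is_monoid inj_onD monoid.m_closed)
  qed
  then have "grp_center A = carrier A" unfolding grp_center_def by auto
  then show False using assms(1,2) by (simp add: complete_grp_def simple_grp_def)
qed

context group begin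

lemma inv_cancel_l [simp]: "k \<in> carrier G \<Longrightarrow> y \<in> carrier G \<Longrightarrow> inv k \<otimes> (k \<otimes> y) = y"
  by (metis l_inv l_one inv_closed m_assoc)
lemma inv_cancel_l' [simp]: "k \<in> carrier G \<Longrightarrow> y \<in> carrier G \<Longrightarrow> k \<otimes> (inv k \<otimes> y) = y"
  by (metis r_inv l_one inv_closed m_assoc)

lemma conj_hom: assumes "k \<in> carrier G" shows "(\<lambda>y. k \<otimes> y \<otimes> inv k) \<in> hom G G"
  unfolding hom_def using assms by (auto simp: m_assoc)

lemma conj_inj: assumes "k \<in> carrier G" shows "inj_on (\<lambda>y. k \<otimes> y \<otimes> inv k) (carrier G)"
  unfolding inj_on_def using assms by auto

lemma centr_subgroup: assumes "a \<in> carrier G" shows "subgroup {x \<in> carrier G. a \<otimes> x = x \<otimes> a} G"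
proof (rule subgroupI)
  show "{x \<in> carrier G. a \<otimes> x = x \<otimes> a} \<noteq> {}" using assms by auto
next
  fix b assume b: "b \<in> {x \<in> carrier G. a \<otimes> x = x \<otimes> a}"
  then have bc: "b \<in> carrier G" and ab: "a \<otimes> b = b \<otimes> a" by auto
  have "inv b \<otimes> (a \<otimes> b) \<otimes> inv b = inv b \<otimes> (b \<otimes> a) \<otimes> inv b" using ab by simp
  then have "inv b \<otimes> a = a \<otimes> inv b" using bc assms by (simp add: m_assoc)
  then show "inv b \<in> {x \<in> carrier G. a \<otimes> x = x \<otimes> a}" using b assms by (simp add: m_assoc)
next
  fix b c assume "b \<in> {x \<in> carrier G. a \<otimes> x = x \<otimes> a}" "c \<in> {x \<in> carrier G. a \<otimes> x = x \<otimes> a}"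
  then show "b \<otimes> c \<in> {x \<in> carrier G. a \<otimes> x = x \<otimes> a}" using assms
    by (simp add: m_assoc[symmetric]) (metis m_assoc)
qed auto

lemma restrict_hom: assumes "f \<in> hom G G" "subgroup H G" "f ` H \<subseteq> H"
  shows "f \<in> hom (G\<lparr>carrier := H\<rparr>) (G\<lparr>carrier := H\<rparr>)"
  using assms subgroup.subset[OF assms(2)] unfolding hom_def by (force simp: Pi_iff subset_iff)

lemma conj_back:
  assumes "subgroup H G" "co_hopfian (G\<lparr>carrier := H\<rparr>)" "g \<in> carrier G"
    "H \<subseteq> conj_subset G g H"
  shows "conj_subset G g H \<subseteq> H"
proof -
  have Hs: "H \<subseteq> carrier G" using subgroup.subset[OF assms(1)] .
  define \<theta> where "\<theta> = (\<lambda>y. g \<otimes> y \<otimes> inv g)"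
  have im: "\<theta> ` H \<subseteq> H"
  proof
    fix z assume "z \<in> \<theta> ` H"
    then obtain x where x: "x \<in> H" "z = \<theta> x" by auto
    then obtain h where h: "h \<in> H" "x = inv g \<otimes> h \<otimes> g" using assms(4) unfolding conj_subset_def by auto
    have "z = h" using x h Hs assms(3) unfolding \<theta>_def by (auto simp: m_assoc)
    then show "z \<in> H" using h by simp
  qed
  have hom: "\<theta> \<in> hom (G\<lparr>carrier := H\<rparr>) (G\<lparr>carrier := H\<rparr>)"
    using restrict_hom[OF conj_hom[OF assms(3)] assms(1)] im unfolding \<theta>_def by simp
  have inj: "inj_on \<theta> H" using conj_inj[OF assms(3)] Hs unfolding \<theta>_def by (meson inj_on_subset)
  have "\<theta> \<in> iso (G\<lparr>carrier := H\<rparr>) (G\<lparr>carrier := H\<rparr>)"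
    using assms(2) hom inj unfolding co_hopfian_def by auto
  then have eq: "\<theta> ` H = H" unfolding iso_def bij_betw_def by auto
  show ?thesis
  proof
    fix z assume "z \<in> conj_subset G g H"
    then obtain h where h: "h \<in> H" "z = inv g \<otimes> h \<otimes> g" unfolding conj_subset_def by auto
    then obtain x where x: "x \<in> H" "h = \<theta> x" using eq by blast
    have "z = x" using x h Hs assms(3) unfolding \<theta>_def by (auto simp: m_assoc)
    then show "z \<in> H" using x by simp
  qed
qed

lemma main:
  assumes "subgroup H G" and "H \<noteq> carrier G"
    and "simple_grp (G\<lparr>carrier := H\<rparr>)"
    and "co_hopfian (G\<lparr>carrier := H\<rparr>)"
    and "complete_grp (G\<lparr>carrier := H\<rparr>)"
    and "simple_grp G" and "complete_grp G"
    and "\<forall>K. subgroup K G \<and> K \<noteq> carrier G \<longrightarrow>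
           cyclic_group (G\<lparr>carrier := K\<rparr>) \<or> (\<exists>g \<in> carrier G. K \<subseteq> conj_subset G g H)"
  shows "co_hopfian G \<and> localization (\<lambda>x. x) (G\<lparr>carrier := H\<rparr>) G"
proof -
  note sub = assms(1) and HG = assms(2) and simS = assms(3) and chS = assms(4) and cpS = assms(5)
    and simG = assms(6) and cpG = assms(7) and prp = assms(8)
  have gG: "group G" by (rule is_group)
  have Hs: "H \<subseteq> carrier G" using subgroup.subset[OF sub] .
  have gS: "group (G\<lparr>carrier := H\<rparr>)" using subgroup_imp_group[OF sub] .
  obtain x0 where x0: "x0 \<in> H" "x0 \<noteq> \<one>"
    using simS subgroup.one_closed[OF sub] unfolding simple_grp_def by auto
  have coG: "co_hopfian G"
    unfolding co_hopfian_def
  proof (intro conjI gG ballI impI)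
    fix f assume f: "f \<in> hom G G" and inj: "inj_on f (carrier G)"
    interpret fh: group_hom G G f using gG f by (simp add: group_hom_def group_hom_axioms_def)
    have sf: "subgroup (f ` carrier G) G" by (rule fh.img_is_subgroup)
    show "f \<in> iso G G"
    proof (cases "f ` carrier G = carrier G")
      case True then show ?thesis using f inj unfolding iso_def bij_betw_def by auto
    next
      case False
      have "\<not> cyclic_group (G\<lparr>carrier := f ` carrier G\<rparr>)"
        using noncyc[OF cpG simG gG f inj _ sf] by auto
      then obtain g where g: "g \<in> carrier G" "f ` carrier G \<subseteq> conj_subset G g H"
        using prp sf False by blast
      define \<theta> where "\<theta> = (\<lambda>y. g \<otimes> f y \<otimes> inv g)"
      have \<theta>H: "\<theta> y \<in> H" if "y \<in> carrier G" for y
      proof -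
        have "f y \<in> conj_subset G g H" using g that by auto
        then obtain h where h: "h \<in> H" "f y = inv g \<otimes> h \<otimes> g" unfolding conj_subset_def by auto
        have hc: "h \<in> carrier G" using h Hs by auto
        have "\<theta> y = h" unfolding \<theta>_def h(2) using hc g by (simp add: m_assoc)
        then show ?thesis using h by simp
      qed
      have th: "\<theta> \<in> hom G G" unfolding \<theta>_def
        using Group.hom_compose[OF f conj_hom[OF g(1)]] by (simp add: comp_def)
      have thS: "\<theta> \<in> hom (G\<lparr>carrier := H\<rparr>) (G\<lparr>carrier := H\<rparr>)"
        using restrict_hom[OF th sub] \<theta>H Hs by auto
      have thinj: "inj_on \<theta> (carrier G)"
        using inj conj_inj[OF g(1)] unfolding \<theta>_def inj_on_def by auto
      then have "inj_on \<theta> H" using Hs by (meson inj_on_subset)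
      then have "\<theta> \<in> iso (G\<lparr>carrier := H\<rparr>) (G\<lparr>carrier := H\<rparr>)"
        using chS thS unfolding co_hopfian_def by auto
      then have eq: "\<theta> ` H = H" unfolding iso_def bij_betw_def by auto
      obtain y where y: "y \<in> carrier G" "y \<notin> H" using HG Hs by blast
      then obtain x where "x \<in> H" "\<theta> y = \<theta> x" using \<theta>H eq by (metis imageE)
      then have "y = x" using thinj y Hs by (meson inj_onD subsetD)
      then show ?thesis using y \<open>x \<in> H\<close> by simp
    qed
  qed
  have idS: "(\<lambda>x. x) \<in> hom (G\<lparr>carrier := H\<rparr>) G" using Hs unfolding hom_def by auto
  have one_H: "\<one> \<in> H" using subgroup.one_closed[OF sub] .
  have U: "\<forall>y\<in>carrier G. \<psi>' y = k \<otimes> y \<otimes> inv k"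
    if \<psi>': "\<psi>' \<in> hom G G" and k: "k \<in> carrier G" and ext: "\<forall>x\<in>H. \<psi>' x = k \<otimes> x \<otimes> inv k" for \<psi>' k
  proof -
    define \<chi> where "\<chi> = (\<lambda>y. inv k \<otimes> \<psi>' y \<otimes> k)"
    have \<chi>h: "\<chi> \<in> hom G G"
      using Group.hom_compose[OF \<psi>' conj_hom[OF inv_closed[OF k]]] k unfolding \<chi>_def by (simp add: comp_def)
    have \<chi>id: "\<chi> x = x" if "x \<in> H" for x
      using that ext k Hs unfolding \<chi>_def by (auto simp: m_assoc)
    have "inj_on \<chi> (carrier G)"
      using simple_hom_cases[OF simG gG \<chi>h] \<chi>id x0 Hs by (metis subsetD)
    then have "\<chi> \<in> iso G G" using coG \<chi>h unfolding co_hopfian_def by auto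
    then obtain a where a: "a \<in> carrier G" "\<forall>x\<in>carrier G. \<chi> x = a \<otimes> x \<otimes> inv a"
      using cpG unfolding complete_grp_def by auto
    have ac: "a \<otimes> x = x \<otimes> a" if "x \<in> H" for x
    proof -
      have xc: "x \<in> carrier G" using that Hs by auto
      have "x = a \<otimes> x \<otimes> inv a" using a \<chi>id that xc by auto
      then have "x \<otimes> a = (a \<otimes> x \<otimes> inv a) \<otimes> a" by simp
      then show ?thesis using a xc by (simp add: m_assoc)
    qed
    define C where "C = {x \<in> carrier G. a \<otimes> x = x \<otimes> a}"
    have Csub: "subgroup C G" unfolding C_def by (rule centr_subgroup[OF a(1)])
    have HC: "H \<subseteq> C" using ac Hs unfolding C_def by auto
    have aC: "a \<in> C" using a unfolding C_def by auto
    have a1: "a = \<one>"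
    proof (cases "C = carrier G")
      case True
      then have "a \<in> grp_center G" using a unfolding grp_center_def C_def by auto
      then show ?thesis using cpG unfolding complete_grp_def by auto
    next
      case False
      have "\<not> cyclic_group (G\<lparr>carrier := C\<rparr>)"
        using noncyc[OF cpS simS gG idS _ _ Csub] HC by (auto simp: inj_on_def)
      then obtain g' where g': "g' \<in> carrier G" "C \<subseteq> conj_subset G g' H"
        using prp Csub False by blast
      have "conj_subset G g' H \<subseteq> H" using conj_back[OF sub chS g'(1)] g'(2) HC by auto
      then have "a \<in> H" using aC g' by auto
      then have "a \<in> grp_center (G\<lparr>carrier := H\<rparr>)" using ac unfolding grp_center_def by auto
      then show ?thesis using cpS unfolding complete_grp_def by auto
    qed
    show ?thesis
    proof
      fix y assume y: "y \<in> carrier G"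
      have "\<chi> y = y" using a a1 y by simp
      then have "k \<otimes> \<chi> y \<otimes> inv k = k \<otimes> y \<otimes> inv k" by simp
      moreover have "k \<otimes> \<chi> y \<otimes> inv k = \<psi>' y"
        unfolding \<chi>_def using k y \<psi>' hom_in_carrier[OF \<psi>' y] by (simp add: m_assoc)
      ultimately show "\<psi>' y = k \<otimes> y \<otimes> inv k" by simp
    qed
  qed
  have loc: "localization (\<lambda>x. x) (G\<lparr>carrier := H\<rparr>) G"
    unfolding localization_def
  proof (intro conjI idS ballI)
    fix \<phi> assume \<phi>: "\<phi> \<in> hom (G\<lparr>carrier := H\<rparr>) G"
    show "\<exists>\<psi>\<in>hom G G. (\<forall>x\<in>carrier (G\<lparr>carrier := H\<rparr>). \<psi> x = \<phi> x) \<and>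
          (\<forall>\<psi>'\<in>hom G G. (\<forall>x\<in>carrier (G\<lparr>carrier := H\<rparr>). \<psi>' x = \<phi> x) \<longrightarrow>
             (\<forall>y\<in>carrier G. \<psi>' y = \<psi> y))"
    proof (cases "\<forall>x\<in>H. \<phi> x = \<one>")
      case True
      have h1: "(\<lambda>_. \<one>) \<in> hom G G" unfolding hom_def by auto
      show ?thesis
      proof (intro bexI[OF _ h1] conjI ballI impI)
        fix x assume "x \<in> carrier (G\<lparr>carrier := H\<rparr>)" then show "\<one> = \<phi> x" using True by simp
      next
        fix \<psi>' y assume \<psi>': "\<psi>' \<in> hom G G" and e: "\<forall>x\<in>carrier (G\<lparr>carrier := H\<rparr>). \<psi>' x = \<phi> x"
          and y: "y \<in> carrier G"
        have e1: "\<forall>x\<in>H. \<psi>' x = \<one>" using e True by simp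
        have "\<not> inj_on \<psi>' (carrier G)"
        proof
          assume "inj_on \<psi>' (carrier G)"
          moreover have "\<psi>' x0 = \<psi>' \<one>" using e1 x0 one_H by simp
          ultimately show False using x0 Hs by (meson inj_onD one_closed subsetD)
        qed
        then show "\<psi>' y = \<one>" using simple_hom_cases[OF simG gG \<psi>'] y by auto
      qed
    next
      case False
      then have inj: "inj_on \<phi> H" using simple_hom_cases[OF simS gG \<phi>] by auto
      interpret ph: group_hom "G\<lparr>carrier := H\<rparr>" G \<phi>
        using gS gG \<phi> by (simp add: group_hom_def group_hom_axioms_def)
      have sf: "subgroup (\<phi> ` H) G" using ph.img_is_subgroup by simp
      have ne: "\<phi> ` H \<noteq> carrier G"
      proof
        assume eq: "\<phi> ` H = carrier G"
        have "\<phi> \<in> iso (G\<lparr>carrier := H\<rparr>) G" using \<phi> inj eq unfolding iso_def bij_betw_def by auto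
        then have ri: "inv_into H \<phi> \<in> iso G (G\<lparr>carrier := H\<rparr>)"
          using group.iso_set_sym[OF gS] by fastforce
        then have rh: "inv_into H \<phi> \<in> hom G G" using Hs unfolding iso_def hom_def by auto
        have rb: "bij_betw (inv_into H \<phi>) (carrier G) H" using ri unfolding iso_def by auto
        then have "inj_on (inv_into H \<phi>) (carrier G)" unfolding bij_betw_def by auto
        then have "inv_into H \<phi> \<in> iso G G" using coG rh unfolding co_hopfian_def by auto
        then have "inv_into H \<phi> ` carrier G = carrier G" unfolding iso_def bij_betw_def by auto
        then show False using rb HG unfolding bij_betw_def by auto
      qed
      have "\<not> cyclic_group (G\<lparr>carrier := \<phi> ` H\<rparr>)"
        using noncyc[OF cpS simS gG \<phi> _ _ sf] inj by auto
      then obtain g where g: "g \<in> carrier G" "\<phi> ` H \<subseteq> conj_subset G g H"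
        using prp sf ne by blast
      define \<theta> where "\<theta> = (\<lambda>y. g \<otimes> \<phi> y \<otimes> inv g)"
      have \<theta>H: "\<theta> y \<in> H" if "y \<in> H" for y
      proof -
        have "\<phi> y \<in> conj_subset G g H" using g that by auto
        then obtain h where h: "h \<in> H" "\<phi> y = inv g \<otimes> h \<otimes> g" unfolding conj_subset_def by auto
        have hc: "h \<in> carrier G" using h Hs by auto
        have "\<theta> y = h" unfolding \<theta>_def h(2) using hc g by (simp add: m_assoc)
        then show ?thesis using h by simp
      qed
      have \<phi>c: "\<phi> y \<in> carrier G" if "y \<in> H" for y using \<phi> that unfolding hom_def by auto
      have thS: "\<theta> \<in> hom (G\<lparr>carrier := H\<rparr>) (G\<lparr>carrier := H\<rparr>)"
        using \<phi> \<theta>H g \<phi>c unfolding hom_def \<theta>_def by (auto simp: m_assoc)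
      have "inj_on \<theta> H" using inj g \<phi>c unfolding \<theta>_def inj_on_def by auto
      then have "\<theta> \<in> iso (G\<lparr>carrier := H\<rparr>) (G\<lparr>carrier := H\<rparr>)"
        using chS thS unfolding co_hopfian_def by auto
      then obtain h where h: "h \<in> H" "\<forall>x\<in>H. \<theta> x = h \<otimes> x \<otimes> inv\<^bsub>G\<lparr>carrier := H\<rparr>\<^esub> h"
        using cpS unfolding complete_grp_def by auto
      have hc: "h \<in> carrier G" using h Hs by auto
      have th: "\<theta> x = h \<otimes> x \<otimes> inv h" if "x \<in> H" for x using h that m_inv_consistent[OF sub] by simp
      define k where "k = inv g \<otimes> h"
      have kc: "k \<in> carrier G" using g hc unfolding k_def by simp
      have ext: "\<phi> x = k \<otimes> x \<otimes> inv k" if "x \<in> H" for x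
      proof -
        have xc: "x \<in> carrier G" using that Hs by auto
        have "inv g \<otimes> \<theta> x \<otimes> g = \<phi> x" unfolding \<theta>_def using g \<phi>c that by (simp add: m_assoc)
        moreover have "inv g \<otimes> \<theta> x \<otimes> g = k \<otimes> x \<otimes> inv k"
          unfolding th[OF that] k_def using g hc xc by (simp add: m_assoc inv_mult_group)
        ultimately show ?thesis by simp
      qed
      show ?thesis
      proof (intro bexI[OF _ conj_hom[OF kc]] conjI ballI impI)
        fix x assume "x \<in> carrier (G\<lparr>carrier := H\<rparr>)" then show "k \<otimes> x \<otimes> inv k = \<phi> x" using ext by simp
      next
        fix \<psi>' y assume \<psi>': "\<psi>' \<in> hom G G" and e: "\<forall>x\<in>carrier (G\<lparr>carrier := H\<rparr>). \<psi>' x = \<phi> x"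
          and y: "y \<in> carrier G"
        show "\<psi>' y = k \<otimes> y \<otimes> inv k" using U[OF \<psi>' kc] e ext y by simp
      qed
    qed
  qed
  show ?thesis using coG loc by simp
qed


end

theorem theorem5p4:
  fixes G :: "('a, 'b) monoid_scheme" and H :: "'a set"
  assumes "subgroup H G" and "H \<noteq> carrier G"
    and "simple_grp (G\<lparr>carrier := H\<rparr>)"
    and "co_hopfian (G\<lparr>carrier := H\<rparr>)"
    and "complete_grp (G\<lparr>carrier := H\<rparr>)"
    and "simple_grp G" and "complete_grp G"
    and "\<forall>K. subgroup K G \<and> K \<noteq> carrier G \<longrightarrow>
           cyclic_group (G\<lparr>carrier := K\<rparr>) \<or> (\<exists>g \<in> carrier G. K \<subseteq> conj_subset G g H)"
  shows "co_hopfian G \<and> localization (\<lambda>x. x) (G\<lparr>carrier := H\<rparr>) G"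
  using group.main[OF _ assms] assms(6) by (simp add: simple_grp_def)

end
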